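(* Let $Q$ be a quantale with m-filters $(\mathcal{F}_k)_{k=1}^\infty$ such that $\mathcal{F}=\bigcap_{k=1}^\infty\mathcal{F}_k$ is locally solid, and let $M$ be a shrinkable $Q$-module such that every $\mathcal{F}_k$ is 1-step over $M$. Then the map $M_\mathcal{F}\to\prod_{k=1}^\infty M_{\mathcal{F}_k}$, $\overline x\mapsto(\overline x)_k$, is injective. (More precisely: for $a,b\in M$, if $a\preceq^1_{\mathcal{F}_k}b$ for all $k$, then $a\preceq^1_\mathcal{F}b$.)
   Context: A quantale is a poset $Q$ with all nonempty joins $\sum$ (no bottom required), top $1$, commutative associative multiplication with unit $1$ distributing over nonempty joins. A $Q$-module is a poset $M$ with all nonempty joins and an associative unital action distributing over nonempty joins in each variable. An m-filter is a subset of $Q$ containing $1$, upward closed and closed under multiplication. $\mathcal{F}$ is locally solid if there is a nonempty $W\subseteq Q$ with $\sum W=1$ such that for every $w\in W$ and every nonempty family $(x_i)_{i\in I}$ with $\sum_ix_i\in\mathcal{F}$ there exist $t\in\mathcal{F}$ and finite nonempty $I_0\subseteq I$ with $tw\le\sum_{i\in I_0}x_i$. For $x,x_i$ write $x\le^*\sum_ix_i$ if $x\le\sum_{i\in I_0}x_i$ for some finite nonempty $I_0$; $M$ is shrinkable if whenever $x\le\sum_ix_i$ there is a family $(y_j)$ with $x=\sum_jy_j$ and each $y_j\le^*\sum_ix_i$. For $a,b\in M$: $a\preceq^1_\mathcal{F}b$ means there are families $(a_i)$ in $M$, $(s_i)$ in $\mathcal{F}$ with $a\le\sum a_i$ and $s_ia_i\le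 b$; $a\preceq^n_\mathcal{F}b$ means a chain of $n$ such steps; $a\preceq_\mathcal{F}b$ means $a\preceq^n_\mathcal{F}b$ for some $n\ge1$. $M_\mathcal{F}$ is $M$ modulo $a\sim b\iff a\preceq_\mathcal{F}b\preceq_\mathcal{F}a$, with classes $\overline a$. $\mathcal{F}$ is localizable over $M$ if for each $b$ there is $n_b$ with $a\preceq_\mathcal{F}b\Rightarrow a\preceq^{n_b}_\mathcal{F}b$; 1-step over $M$ if localizable and $a\preceq_\mathcal{F}b\Rightarrow a\preceq^1_\mathcal{F}b$. *)

theory Defs
  imports Main
begin

text \<open>No bottom is required.\<close>


definition is_nejoin :: "('a::order set \<Rightarrow> 'a) \<Rightarrow> bool" where
  "is_nejoin j \<longleftrightarrow>
     (\<forall>X. X \<noteq> {} \<longrightarrow> (\<forall>x\<in>X. x \<le> j X) \<and> (\<forall>u. (\<forall>x\<in>X. x \<le> u) \<longrightarrow> j X \<le> u))"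

definition quantale :: "('q::order set \<Rightarrow> 'q) \<Rightarrow> ('q \<Rightarrow> 'q \<Rightarrow> 'q) \<Rightarrow> 'q \<Rightarrow> bool" where
  "quantale jQ mult one \<longleftrightarrow>
     is_nejoin jQ \<and>
     (\<forall>x. x \<le> one) \<and>
     (\<forall>x y. mult x y = mult y x) \<and>
     (\<forall>x y z. mult (mult x y) z = mult x (mult y z)) \<and>
     (\<forall>x. mult one x = x) \<and>
     (\<forall>x X. X \<noteq> {} \<longrightarrow> mult x (jQ X) = jQ (mult x ` X))"

definition qmodule ::
  "('q::order set \<Rightarrow> 'q) \<Rightarrow> ('q \<Rightarrow> 'q \<Rightarrow> 'q) \<Rightarrow> 'q \<Rightarrow>
   ('m::order set \<Rightarrow> 'm) \<Rightarrow> ('q \<Rightarrow> 'm \<Rightarrow> 'm) \<Rightarrow> bool" where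
  "qmodule jQ mult one jM act \<longleftrightarrow>
     is_nejoin jM \<and>
     (\<forall>s t a. act (mult s t) a = act s (act t a)) \<and>
     (\<forall>a. act one a = a) \<and>
     (\<forall>s A. A \<noteq> {} \<longrightarrow> act s (jM A) = jM (act s ` A)) \<and>
     (\<forall>S a. S \<noteq> {} \<longrightarrow> act (jQ S) a = jM ((\<lambda>s. act s a) ` S))"

definition mfilter :: "('q::order \<Rightarrow> 'q \<Rightarrow> 'q) \<Rightarrow> 'q \<Rightarrow> 'q set \<Rightarrow> bool" where
  "mfilter mult one F \<longleftrightarrow>
     one \<in> F \<and> (\<forall>x y. x \<in> F \<and> x \<le> y \<longrightarrow> y \<in> F) \<and>
     (\<forall>x\<in>F. \<forall>y\<in>F. mult x y \<in> F)"

text \<open>Families are represented by their (nonempty) sets of members; joins of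
families only depend on the set of members.\<close>

definition locally_solid ::
  "('q::order set \<Rightarrow> 'q) \<Rightarrow> ('q \<Rightarrow> 'q \<Rightarrow> 'q) \<Rightarrow> 'q \<Rightarrow> 'q set \<Rightarrow> bool" where
  "locally_solid jQ mult one F \<longleftrightarrow>
     (\<exists>W. W \<noteq> {} \<and> jQ W = one \<and>
        (\<forall>w\<in>W. \<forall>X. X \<noteq> {} \<and> jQ X \<in> F \<longrightarrow>
           (\<exists>t\<in>F. \<exists>I0. I0 \<subseteq> X \<and> finite I0 \<and> I0 \<noteq> {} \<and> mult t w \<le> jQ I0)))"

definition le_star :: "('m::order set \<Rightarrow> 'm) \<Rightarrow> 'm \<Rightarrow> 'm set \<Rightarrow> bool" where
  "le_star jM x X \<longleftrightarrow> (\<exists>I0. I0 \<subseteq> X \<and> finite I0 \<and> I0 \<noteq> {} \<and> x \<le> jM I0)"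

definition shrinkable :: "('m::order set \<Rightarrow> 'm) \<Rightarrow> bool" where
  "shrinkable jM \<longleftrightarrow>
     (\<forall>x X. X \<noteq> {} \<and> x \<le> jM X \<longrightarrow>
        (\<exists>Y. Y \<noteq> {} \<and> x = jM Y \<and> (\<forall>y\<in>Y. le_star jM y X)))"

definition prec1 ::
  "('m::order set \<Rightarrow> 'm) \<Rightarrow> ('q \<Rightarrow> 'm \<Rightarrow> 'm) \<Rightarrow> 'q set \<Rightarrow> 'm \<Rightarrow> 'm \<Rightarrow> bool" where
  "prec1 jM act F a b \<longleftrightarrow>
     (\<exists>S::('q \<times> 'm) set. S \<noteq> {} \<and> fst ` S \<subseteq> F \<and> a \<le> jM (snd ` S) \<and>
        (\<forall>(s, c)\<in>S. act s c \<le> b))"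

definition precn ::
  "('m::order set \<Rightarrow> 'm) \<Rightarrow> ('q \<Rightarrow> 'm \<Rightarrow> 'm) \<Rightarrow> 'q set \<Rightarrow> nat \<Rightarrow> 'm \<Rightarrow> 'm \<Rightarrow> bool" where
  "precn jM act F n a b \<longleftrightarrow>
     (\<exists>c::nat \<Rightarrow> 'm. c 0 = a \<and> c n = b \<and> (\<forall>i<n. prec1 jM act F (c i) (c (Suc i))))"

definition prec ::
  "('m::order set \<Rightarrow> 'm) \<Rightarrow> ('q \<Rightarrow> 'm \<Rightarrow> 'm) \<Rightarrow> 'q set \<Rightarrow> 'm \<Rightarrow> 'm \<Rightarrow> bool" where
  "prec jM act F a b \<longleftrightarrow> (\<exists>n\<ge>1. precn jM act F n a b)"

definition prec_equiv ::
  "('m::order set \<Rightarrow> 'm) \<Rightarrow> ('q \<Rightarrow> 'm \<Rightarrow> 'm) \<Rightarrow> 'q set \<Rightarrow> 'm \<Rightarrow> 'm \<Rightarrow> bool" where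
  "prec_equiv jM act F a b \<longleftrightarrow> prec jM act F a b \<and> prec jM act F b a"

definition cls ::
  "('m::order set \<Rightarrow> 'm) \<Rightarrow> ('q \<Rightarrow> 'm \<Rightarrow> 'm) \<Rightarrow> 'q set \<Rightarrow> 'm \<Rightarrow> 'm set" where
  "cls jM act F a = {b. prec_equiv jM act F a b}"

definition localizable ::
  "('m::order set \<Rightarrow> 'm) \<Rightarrow> ('q \<Rightarrow> 'm \<Rightarrow> 'm) \<Rightarrow> 'q set \<Rightarrow> bool" where
  "localizable jM act F \<longleftrightarrow>
     (\<forall>b. \<exists>nb. \<forall>a. prec jM act F a b \<longrightarrow> precn jM act F nb a b)"

definition one_step ::
  "('m::order set \<Rightarrow> 'm) \<Rightarrow> ('q \<Rightarrow> 'm \<Rightarrow> 'm) \<Rightarrow> 'q set \<Rightarrow> bool" where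
  "one_step jM act F \<longleftrightarrow>
     localizable jM act F \<and> (\<forall>a b. prec jM act F a b \<longrightarrow> prec1 jM act F a b)"

end

theory Submission
  imports Defs
begin

lemma nj_upper: "is_nejoin j \<Longrightarrow> x \<in> X \<Longrightarrow> x \<le> j X"
  unfolding is_nejoin_def by blast

lemma nj_least: "is_nejoin j \<Longrightarrow> X \<noteq> {} \<Longrightarrow> (\<And>x. x \<in> X \<Longrightarrow> x \<le> u) \<Longrightarrow> j X \<le> u"
  unfolding is_nejoin_def by blast

lemma nj_mono: "is_nejoin j \<Longrightarrow> X \<noteq> {} \<Longrightarrow> X \<subseteq> Y \<Longrightarrow> j X \<le> j Y"
  by (rule nj_least) (auto intro: nj_upper)

lemma nj_pair: "is_nejoin j \<Longrightarrow> x \<le> y \<Longrightarrow> j {x, y} = y"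
  by (rule order.antisym) (auto intro: nj_least nj_upper)

lemma qm_nj: "qmodule jQ mult one jM act \<Longrightarrow> is_nejoin jM"
  unfolding qmodule_def by simp
lemma qm_assoc: "qmodule jQ mult one jM act \<Longrightarrow> act (mult s t) a = act s (act t a)"
  unfolding qmodule_def by simp
lemma qm_one: "qmodule jQ mult one jM act \<Longrightarrow> act one a = a"
  unfolding qmodule_def by simp
lemma qm_joinM: "qmodule jQ mult one jM act \<Longrightarrow> A \<noteq> {} \<Longrightarrow> act s (jM A) = jM (act s ` A)"
  unfolding qmodule_def by simp
lemma qm_joinQ: "qmodule jQ mult one jM act \<Longrightarrow> S \<noteq> {} \<Longrightarrow> act (jQ S) a = jM ((\<lambda>s. act s a) ` S)"
  unfolding qmodule_def by simp
lemma q_nj: "quantale jQ mult one \<Longrightarrow> is_nejoin jQ"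
  unfolding quantale_def by simp
lemma q_top: "quantale jQ mult one \<Longrightarrow> x \<le> one"
  unfolding quantale_def by simp
lemma q_comm: "quantale jQ mult one \<Longrightarrow> mult x y = mult y x"
  unfolding quantale_def by blast

lemma act_mono_m:
  assumes "qmodule jQ mult one jM act" "x \<le> y"
  shows "act s x \<le> act s y"
proof -
  have j: "is_nejoin jM" by (rule qm_nj[OF assms(1)])
  have "act s y = act s (jM {x, y})" using nj_pair[OF j assms(2)] by simp
  also have "\<dots> = jM (act s ` {x, y})" by (rule qm_joinM[OF assms(1)]) simp
  finally show ?thesis using nj_upper[OF j, of "act s x" "act s ` {x,y}"] by simp
qed

lemma act_mono_q:
  assumes "quantale jQ mult one" "qmodule jQ mult one jM act" "s \<le> s'"
  shows "act s x \<le> act s' x"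
proof -
  have jq: "is_nejoin jQ" by (rule q_nj[OF assms(1)])
  have j: "is_nejoin jM" by (rule qm_nj[OF assms(2)])
  have "act s' x = act (jQ {s, s'}) x" using nj_pair[OF jq assms(3)] by simp
  also have "\<dots> = jM ((\<lambda>s. act s x) ` {s, s'})" by (rule qm_joinQ[OF assms(2)]) simp
  finally show ?thesis using nj_upper[OF j, of "act s x" "(\<lambda>s. act s x) ` {s,s'}"] by simp
qed

lemma act_le:
  assumes "quantale jQ mult one" "qmodule jQ mult one jM act"
  shows "act s x \<le> x"
proof -
  have "s \<le> one" by (rule q_top[OF assms(1)])
  then have "act s x \<le> act one x" by (rule act_mono_q[OF assms])
  also have "act one x = x" by (rule qm_one[OF assms(2)])
  finally show ?thesis .
qed

lemma mf_one: "mfilter mult one G \<Longrightarrow> one \<in> G"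
  unfolding mfilter_def by simp
lemma mf_up: "mfilter mult one G \<Longrightarrow> x \<in> G \<Longrightarrow> x \<le> y \<Longrightarrow> y \<in> G"
  unfolding mfilter_def by simp
lemma mf_mult: "mfilter mult one G \<Longrightarrow> x \<in> G \<Longrightarrow> y \<in> G \<Longrightarrow> mult x y \<in> G"
  unfolding mfilter_def by simp

lemma combine:
  assumes Q: "quantale jQ mult one" and M: "qmodule jQ mult one jM act" and G: "mfilter mult one G"
  shows "finite I0 \<Longrightarrow> I0 \<noteq> {} \<Longrightarrow> \<forall>c\<in>I0. \<exists>s\<in>G. act s c \<le> b \<Longrightarrow> \<exists>u\<in>G. \<forall>c\<in>I0. act u c \<le> b"
proof (induction I0 rule: finite_ne_induct)
  case (singleton x)
  then show ?case by auto
next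
  case (insert x F)
  then obtain u where u: "u \<in> G" "\<forall>c\<in>F. act u c \<le> b" by auto
  from insert obtain s where s: "s \<in> G" "act s x \<le> b" by auto
  have "mult s u \<in> G" using mf_mult[OF G s(1) u(1)] .
  moreover have "\<forall>c\<in>insert x F. act (mult s u) c \<le> b"
  proof
    fix c assume c: "c \<in> insert x F"
    show "act (mult s u) c \<le> b"
    proof (cases "c = x")
      case True
      have "act (mult s u) c = act (mult u s) c" using q_comm[OF Q, of s u] by (rule arg_cong)
      also have "\<dots> = act u (act s c)" by (rule qm_assoc[OF M])
      also have "\<dots> \<le> act s c" by (rule act_le[OF Q M])
      finally show ?thesis using s True by simp
    next
      case False
      then have "c \<in> F" using c by simp
      have "act (mult s u) c = act s (act u c)" by (rule qm_assoc[OF M])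
      also have "\<dots> \<le> act u c" by (rule act_le[OF Q M])
      finally have "act (mult s u) c \<le> act u c" .
      moreover have "act u c \<le> b" using u(2) \<open>c \<in> F\<close> by blast
      ultimately show ?thesis by (rule order.trans)
    qed
  qed
  ultimately show ?case by blast
qed

lemma join_prec1:
  assumes j: "is_nejoin jM" and Y: "Y \<noteq> {}" and P: "\<forall>y\<in>Y. prec1 jM act F y b"
  shows "prec1 jM act F (jM Y) b"
proof -
  from P have "\<forall>y\<in>Y. \<exists>S. S \<noteq> {} \<and> fst ` S \<subseteq> F \<and> y \<le> jM (snd ` S) \<and> (\<forall>(s, c)\<in>S. act s c \<le> b)"
    unfolding prec1_def by blast
  then obtain Sf where Sf: "\<And>y. y \<in> Y \<Longrightarrow> Sf y \<noteq> {} \<and> fst ` Sf y \<subseteq> F \<and> y \<le> jM (snd ` Sf y) \<and> (\<forall>(s, c)\<in>Sf y. act s c \<le> b)"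
    by metis
  define S where "S = (\<Union>y\<in>Y. Sf y)"
  have ne: "S \<noteq> {}" using Y Sf unfolding S_def by fastforce
  have "fst ` S \<subseteq> F" using Sf unfolding S_def by blast
  moreover have "\<forall>(s, c)\<in>S. act s c \<le> b" using Sf unfolding S_def by blast
  moreover have "jM Y \<le> jM (snd ` S)"
  proof (rule nj_least[OF j Y])
    fix y assume y: "y \<in> Y"
    have "y \<le> jM (snd ` Sf y)" using Sf y by blast
    also have "\<dots> \<le> jM (snd ` S)" using Sf[OF y] y by (intro nj_mono[OF j]) (auto simp: S_def)
    finally show "y \<le> jM (snd ` S)" .
  qed
  ultimately show ?thesis unfolding prec1_def using ne by blast
qed

lemma key:
  fixes jQ :: "'q::order set \<Rightarrow> 'q" and mult :: "'q \<Rightarrow> 'q \<Rightarrow> 'q" and one :: 'q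
    and jM :: "'m::order set \<Rightarrow> 'm" and act :: "'q \<Rightarrow> 'm \<Rightarrow> 'm"
    and Fk :: "nat \<Rightarrow> 'q set"
  assumes Q: "quantale jQ mult one"
    and M: "qmodule jQ mult one jM act"
    and FF: "\<forall>k. mfilter mult one (Fk k)"
    and LS: "locally_solid jQ mult one (\<Inter>k. Fk k)"
    and SH: "shrinkable jM"
    and P: "\<forall>k. prec1 jM act (Fk k) a b"
  shows "prec1 jM act (\<Inter>k. Fk k) a b"
proof -
  define F where "F = (\<Inter>k. Fk k)"
  have jq: "is_nejoin jQ" by (rule q_nj[OF Q])
  have jm: "is_nejoin jM" by (rule qm_nj[OF M])
  from LS obtain W where W: "W \<noteq> {}" "jQ W = one"
    "\<forall>w\<in>W. \<forall>X. X \<noteq> {} \<and> jQ X \<in> F \<longrightarrow>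
           (\<exists>t\<in>F. \<exists>I0. I0 \<subseteq> X \<and> finite I0 \<and> I0 \<noteq> {} \<and> mult t w \<le> jQ I0)"
    unfolding locally_solid_def F_def by blast
  have good: "prec1 jM act F (act w a) b" if w: "w \<in> W" for w
  proof (rule ccontr)
    define bad where "bad z = (\<not> prec1 jM act F (act w z) b)" for z
    assume "\<not> prec1 jM act F (act w a) b"
    then have bada: "bad a" unfolding bad_def by simp
    have step: "\<exists>y. y \<le> z \<and> bad y \<and> (\<exists>u\<in>Fk n. act u y \<le> b)" if z: "z \<le> a" "bad z" for z n
    proof (rule ccontr)
      assume nx: "\<not> ?thesis"
      have Pn: "prec1 jM act (Fk n) a b" using P by (rule spec)
      obtain S where S0: "S \<noteq> {} \<and> fst ` S \<subseteq> Fk n \<and> a \<le> jM (snd ` S) \<and>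
        (\<forall>(s, c)\<in>S. act s c \<le> b)" using Pn unfolding prec1_def by (rule exE)
      have S: "S \<noteq> {}" "fst ` S \<subseteq> Fk n" "a \<le> jM (snd ` S)"
        "\<forall>(s, c)\<in>S. act s c \<le> b" using S0 by simp_all
      have "z \<le> jM (snd ` S)" using z S by (meson order.trans)
      with SH S obtain Y where Y: "Y \<noteq> {}" "z = jM Y" "\<forall>y\<in>Y. le_star jM y (snd ` S)"
        unfolding shrinkable_def by (metis empty_is_image)
      have "prec1 jM act F (act w y) b" if y: "y \<in> Y" for y
      proof -
        have yz: "y \<le> z" using Y y nj_upper[OF jm] by metis
        have ls: "le_star jM y (snd ` S)" using Y(3) y by (rule bspec)
        obtain I0 where I00: "I0 \<subseteq> snd ` S \<and> finite I0 \<and> I0 \<noteq> {} \<and> y \<le> jM I0"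
          using ls unfolding le_star_def by (rule exE)
        have I0: "I0 \<subseteq> snd ` S" "finite I0" "I0 \<noteq> {}" "y \<le> jM I0" using I00 by simp_all
        have "\<forall>c\<in>I0. \<exists>s\<in>Fk n. act s c \<le> b" using I0(1) S(2,4) by fastforce
        then have "\<exists>u\<in>Fk n. \<forall>c\<in>I0. act u c \<le> b" by (rule combine[OF Q M FF[rule_format, of n] I0(2,3)])
        then obtain u where u: "u \<in> Fk n" "\<forall>c\<in>I0. act u c \<le> b" by (elim bexE)
        have "act u y \<le> act u (jM I0)" by (rule act_mono_m[OF M I0(4)])
        also have "\<dots> = jM (act u ` I0)" using qm_joinM[OF M I0(3)] by simp
        also have "\<dots> \<le> b" using u I0(3) by (intro nj_least[OF jm]) auto
        finally have "act u y \<le> b" .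
        then have "\<not> bad y" using nx yz u(1) by blast
        then show ?thesis unfolding bad_def by simp
      qed
      then have "prec1 jM act F (jM (act w ` Y)) b" using Y(1) by (intro join_prec1[OF jm]) auto
      moreover have "act w z = jM (act w ` Y)" using qm_joinM[OF M Y(1)] Y(2) by simp
      ultimately show False using z(2) unfolding bad_def by simp
    qed
    define nxt where "nxt n z = (SOME y. y \<le> z \<and> bad y \<and> (\<exists>u\<in>Fk n. act u y \<le> b))" for n z
    define y where "y = rec_nat a nxt"
    have y0: "y 0 = a" and yS: "y (Suc n) = nxt n (y n)" for n unfolding y_def by simp_all
    have inv: "y n \<le> a \<and> bad (y n)" for n
    proof (induction n)
      case 0 then show ?case using y0 bada by simp
    next
      case (Suc n)
      have "y (Suc n) \<le> y n \<and> bad (y (Suc n)) \<and> (\<exists>u\<in>Fk n. act u (y (Suc n)) \<le> b)"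
        unfolding yS nxt_def using someI_ex[OF step[of "y n" n]] Suc by blast
      then show ?case using Suc by (meson order.trans)
    qed
    have props: "y (Suc n) \<le> y n \<and> (\<exists>u\<in>Fk n. act u (y (Suc n)) \<le> b)" for n
      unfolding yS nxt_def using someI_ex[OF step[of "y n" n]] inv[of n] by blast
    have dec: "y n \<le> y m" if "m \<le> n" for m n
      using that
    proof (induction n rule: dec_induct)
      case base then show ?case by simp
    next
      case (step n) then show ?case using props[of n] by (meson order.trans)
    qed
    have "\<forall>n. \<exists>u. u \<in> Fk n \<and> act u (y (Suc n)) \<le> b" using props by blast
    then have "\<exists>u. \<forall>n. u n \<in> Fk n \<and> act (u n) (y (Suc n)) \<le> b" by (rule choice)
    then obtain u where u0: "\<forall>n. u n \<in> Fk n \<and> act (u n) (y (Suc n)) \<le> b" by (rule exE)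
    have u: "\<And>n. u n \<in> Fk n" "\<And>n. act (u n) (y (Suc n)) \<le> b" using u0 by simp_all
    define X where "X = range u"
    have Xne: "X \<noteq> {}" unfolding X_def by simp
    have jqx: "jQ X \<in> F"
      unfolding F_def
    proof
      fix k assume "k \<in> (UNIV :: nat set)"
      have "u k \<le> jQ X" unfolding X_def by (rule nj_upper[OF jq]) simp
      then show "jQ X \<in> Fk k" using mf_up[OF FF[rule_format, of k] u(1)[of k]] by simp
    qed
    have "\<exists>t\<in>F. \<exists>I0. I0 \<subseteq> X \<and> finite I0 \<and> I0 \<noteq> {} \<and> mult t w \<le> jQ I0"
      using W(3) w Xne jqx by simp
    then obtain t I0 where tI0: "t \<in> F" "I0 \<subseteq> X \<and> finite I0 \<and> I0 \<noteq> {} \<and> mult t w \<le> jQ I0"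
      by (elim bexE exE) (rule that)
    have tI: "t \<in> F" "I0 \<subseteq> X" "finite I0" "I0 \<noteq> {}" "mult t w \<le> jQ I0" using tI0 by simp_all
    define f where "f x = (SOME n. x = u n)" for x
    have fx: "x = u (f x)" if "x \<in> I0" for x
    proof -
      have "\<exists>n. x = u n" using that tI(2) unfolding X_def by blast
      then show ?thesis unfolding f_def by (rule someI_ex)
    qed
    define N where "N = Max (f ` I0)"
    have fN: "f x \<le> N" if "x \<in> I0" for x unfolding N_def using tI(3) that by simp
    have "act x (y (Suc N)) \<le> b" if x: "x \<in> I0" for x
    proof -
      have "y (Suc N) \<le> y (Suc (f x))" using dec fN[OF x] by simp
      then have "act x (y (Suc N)) \<le> act x (y (Suc (f x)))" by (rule act_mono_m[OF M])
      also have "\<dots> \<le> b" using u(2)[of "f x"] fx[OF x] by simp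
      finally show ?thesis .
    qed
    then have "jM ((\<lambda>s. act s (y (Suc N))) ` I0) \<le> b" using tI(4) by (intro nj_least[OF jm]) auto
    moreover have "act (jQ I0) (y (Suc N)) = jM ((\<lambda>s. act s (y (Suc N))) ` I0)"
      using qm_joinQ[OF M tI(4)] by simp
    moreover have "act (mult t w) (y (Suc N)) \<le> act (jQ I0) (y (Suc N))"
      by (rule act_mono_q[OF Q M tI(5)])
    moreover have "act (mult t w) (y (Suc N)) = act t (act w (y (Suc N)))"
      by (rule qm_assoc[OF M])
    ultimately have "act t (act w (y (Suc N))) \<le> b" by simp
    then have "prec1 jM act F (act w (y (Suc N))) b"
      unfolding prec1_def using tI(1) nj_upper[OF jm, of "act w (y (Suc N))" "{act w (y (Suc N))}"]
      by (intro exI[of _ "{(t, act w (y (Suc N)))}"]) auto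
    then show False using inv[of "Suc N"] unfolding bad_def by simp
  qed
  have "a = act one a" using qm_one[OF M] by simp
  also have "\<dots> = jM ((\<lambda>w. act w a) ` W)" using qm_joinQ[OF M W(1), of a] W(2) by simp
  finally have "a = jM ((\<lambda>w. act w a) ` W)" .
  moreover have "prec1 jM act F (jM ((\<lambda>w. act w a) ` W)) b"
    using W(1) good by (intro join_prec1[OF jm]) auto
  ultimately show ?thesis unfolding F_def by simp
qed

lemma precn_trans:
  assumes "precn jM act F n a b" "precn jM act F m b c"
  shows "precn jM act F (n + m) a c"
proof -
  obtain c1 where c1: "c1 0 = a" "c1 n = b" "\<forall>i<n. prec1 jM act F (c1 i) (c1 (Suc i))"
    using assms(1) unfolding precn_def by blast
  obtain c2 where c2: "c2 0 = b" "c2 m = c" "\<forall>i<m. prec1 jM act F (c2 i) (c2 (Suc i))"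
    using assms(2) unfolding precn_def by blast
  define d where "d i = (if i \<le> n then c1 i else c2 (i - n))" for i
  have "\<forall>i<n+m. prec1 jM act F (d i) (d (Suc i))"
  proof (intro allI impI)
    fix i assume i: "i < n + m"
    show "prec1 jM act F (d i) (d (Suc i))"
    proof (cases "i < n")
      case True then show ?thesis using c1 unfolding d_def by simp
    next
      case False
      then have "d i = c2 (i - n)" "d (Suc i) = c2 (Suc (i - n))"
        unfolding d_def using c1(2) c2(1) by (auto simp: Suc_diff_le)
      then show ?thesis using c2(3) i False by simp
    qed
  qed
  moreover have "d 0 = a" "d (n + m) = c" using c1 c2 unfolding d_def by auto
  ultimately show ?thesis unfolding precn_def by blast
qed

lemma prec_trans: "prec jM act F a b \<Longrightarrow> prec jM act F b c \<Longrightarrow> prec jM act F a c"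
  unfolding prec_def by (metis precn_trans le_add1 order.trans)

lemma prec1_prec: "prec1 jM act F a b \<Longrightarrow> prec jM act F a b"
  unfolding prec_def precn_def
  by (rule exI[of _ 1], simp, rule exI[of _ "\<lambda>i. if i = 0 then a else b"], simp)

lemma prec_refl: "one \<in> F \<Longrightarrow> qmodule jQ mult one jM act \<Longrightarrow> prec jM act F a a"
  apply (rule prec1_prec)
  unfolding prec1_def qmodule_def
  by (rule exI[of _ "{(one, a)}"]) (auto intro: nj_upper)

theorem mainTheorem11:
  fixes jQ :: "'q::order set \<Rightarrow> 'q" and mult :: "'q \<Rightarrow> 'q \<Rightarrow> 'q" and one :: 'q
    and jM :: "'m::order set \<Rightarrow> 'm" and act :: "'q \<Rightarrow> 'm \<Rightarrow> 'm"
    and Fk :: "nat \<Rightarrow> 'q set"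
  assumes "quantale jQ mult one"
    and "qmodule jQ mult one jM act"
    and "\<forall>k. mfilter mult one (Fk k)"
    and "locally_solid jQ mult one (\<Inter>k. Fk k)"
    and "shrinkable jM"
    and "\<forall>k. one_step jM act (Fk k)"
  shows "(\<forall>a b. (\<forall>k. cls jM act (Fk k) a = cls jM act (Fk k) b) \<longrightarrow>
                 cls jM act (\<Inter>k. Fk k) a = cls jM act (\<Inter>k. Fk k) b)
       \<and> (\<forall>a b. (\<forall>k. prec1 jM act (Fk k) a b) \<longrightarrow> prec1 jM act (\<Inter>k. Fk k) a b)"
proof
  show P2: "\<forall>a b. (\<forall>k. prec1 jM act (Fk k) a b) \<longrightarrow> prec1 jM act (\<Inter>k. Fk k) a b"
    using key[OF assms(1-5)] by blast
  show "\<forall>a b. (\<forall>k. cls jM act (Fk k) a = cls jM act (Fk k) b) \<longrightarrow>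
                 cls jM act (\<Inter>k. Fk k) a = cls jM act (\<Inter>k. Fk k) b"
  proof (intro allI impI)
    fix a b assume eq: "\<forall>k. cls jM act (Fk k) a = cls jM act (Fk k) b"
    have pe: "prec_equiv jM act (Fk k) a b" for k
    proof -
      have "one \<in> Fk k" using mf_one assms(3) by blast
      then have "b \<in> cls jM act (Fk k) b"
        unfolding cls_def prec_equiv_def using prec_refl[OF _ assms(2)] by blast
      then show ?thesis using eq unfolding cls_def by auto
    qed
    have "prec1 jM act (Fk k) a b \<and> prec1 jM act (Fk k) b a" for k
      using pe[of k] assms(6) unfolding prec_equiv_def one_step_def by blast
    then have ab: "prec jM act (\<Inter>k. Fk k) a b" and ba: "prec jM act (\<Inter>k. Fk k) b a"
      using P2 prec1_prec by blast+
    show "cls jM act (\<Inter>k. Fk k) a = cls jM act (\<Inter>k. Fk k) b"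
      unfolding cls_def prec_equiv_def using ab ba prec_trans by blast
  qed
qed

end
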